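(* Let $T$ be a nontrivial tree of order $n(T)$ with $l(T)$ leaves and $s(T)$ support vertices. Then $\gamma^{d}_2(T)\leq \frac{n(T)+3s(T)-l(T)}{4}$.
   Context: A leaf is a vertex of degree $1$; a support vertex is a vertex adjacent to a leaf. For a tree $T$, $n(T)$, $l(T)$, $s(T)$ denote its order, number of leaves and number of support vertices. A set $D\subseteq V(G)$ is a disjunctive dominating set of $G$ if every vertex $v\notin D$ either has a neighbor in $D$ or has at least two vertices of $D$ at distance exactly $2$ from it. $\gamma^{d}_2(G)$ is the minimum size of such a set. *)

theory Defs
  imports Complex_Main
begin

definition graph :: "'a set \<Rightarrow> 'a set set \<Rightarrow> bool" where
  "graph V E \<longleftrightarrow> finite V \<and> (\<forall>e\<in>E. e \<subseteq> V \<and> card e = 2)"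

definition adj :: "'a set set \<Rightarrow> 'a \<Rightarrow> 'a \<Rightarrow> bool" where
  "adj E u v \<longleftrightarrow> {u, v} \<in> E"

definition walk :: "'a set \<Rightarrow> 'a set set \<Rightarrow> 'a list \<Rightarrow> bool" where
  "walk V E p \<longleftrightarrow> p \<noteq> [] \<and> set p \<subseteq> V \<and>
     (\<forall>i. Suc i < length p \<longrightarrow> adj E (p ! i) (p ! Suc i))"

definition connected :: "'a set \<Rightarrow> 'a set set \<Rightarrow> bool" where
  "connected V E \<longleftrightarrow> (\<forall>u\<in>V. \<forall>v\<in>V. \<exists>p. walk V E p \<and> hd p = u \<and> last p = v)"

definition has_cycle :: "'a set \<Rightarrow> 'a set set \<Rightarrow> bool" where
  "has_cycle V E \<longleftrightarrow> (\<exists>p. walk V E p \<and> length p \<ge> 3 \<and> distinct p \<and> adj E (last p) (hd p))"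

definition tree :: "'a set \<Rightarrow> 'a set set \<Rightarrow> bool" where
  "tree V E \<longleftrightarrow> graph V E \<and> V \<noteq> {} \<and> connected V E \<and> \<not> has_cycle V E"

definition degree :: "'a set set \<Rightarrow> 'a \<Rightarrow> nat" where
  "degree E v = card {u. adj E v u}"

definition leaves :: "'a set \<Rightarrow> 'a set set \<Rightarrow> 'a set" where
  "leaves V E = {v\<in>V. degree E v = 1}"

definition support_vertices :: "'a set \<Rightarrow> 'a set set \<Rightarrow> 'a set" where
  "support_vertices V E = {v\<in>V. \<exists>u\<in>leaves V E. adj E v u}"

text \<open>Distance: number of edges of a shortest walk (defined for connected graphs).\<close>
definition dist :: "'a set \<Rightarrow> 'a set set \<Rightarrow> 'a \<Rightarrow> 'a \<Rightarrow> nat" where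
  "dist V E u v = (LEAST k. \<exists>p. walk V E p \<and> hd p = u \<and> last p = v \<and> length p = Suc k)"

definition disj_dom_set :: "'a set \<Rightarrow> 'a set set \<Rightarrow> 'a set \<Rightarrow> bool" where
  "disj_dom_set V E D \<longleftrightarrow> D \<subseteq> V \<and>
     (\<forall>v\<in>V - D. (\<exists>u\<in>D. adj E v u) \<or> 2 \<le> card {u\<in>D. dist V E v u = 2})"

definition disj_dom_number :: "'a set \<Rightarrow> 'a set set \<Rightarrow> nat" where
  "disj_dom_number V E = (LEAST k. \<exists>D. disj_dom_set V E D \<and> card D = k)"

end

theory Submission
  imports Defs
begin


lemma walk_succ: "walk V E p \<longleftrightarrow> p \<noteq> [] \<and> set p \<subseteq> V \<and> successively (adj E) p"
  unfolding walk_def successively_conv_nth by auto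

lemma adj_sym: "adj E u v \<Longrightarrow> adj E v u"
  unfolding adj_def by (simp add: insert_commute)

lemma adj_comm: "adj E u v = adj E v u"
  unfolding adj_def by (simp add: insert_commute)

locale tr =
  fixes V :: "'a set" and E :: "'a set set"
  assumes tree: "tree V E"
begin

lemma finV: "finite V" using tree unfolding tree_def graph_def by auto

lemma adjV: assumes "adj E u v" shows "u \<in> V" "v \<in> V" "u \<noteq> v"
proof -
  have "{u,v} \<subseteq> V" "card {u,v} = 2" using assms tree unfolding tree_def graph_def adj_def by auto
  thus "u \<in> V" "v \<in> V" "u \<noteq> v" by auto
qed

lemma conn: "u \<in> V \<Longrightarrow> v \<in> V \<Longrightarrow> \<exists>p. walk V E p \<and> hd p = u \<and> last p = v"
  using tree unfolding tree_def connected_def by auto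

lemma nbr_fin: "finite {u. adj E v u}"
  by (rule finite_subset[OF _ finV]) (auto dest: adjV)

lemma walk_join: "walk V E p \<Longrightarrow> walk V E q \<Longrightarrow> last p = hd q \<Longrightarrow> walk V E (p @ tl q)"
  unfolding walk_succ
  by (cases q) (auto simp: successively_append_iff successively_Cons)

lemma walk_rev: "walk V E p \<Longrightarrow> walk V E (rev p)"
  unfolding walk_succ by (simp add: adj_comm)

end



lemma walk_distinct:
  "walk V E p \<Longrightarrow> \<exists>q. walk V E q \<and> distinct q \<and> hd q = hd p \<and> last q = last p \<and> set q \<subseteq> set p"
proof (induction "length p" arbitrary: p rule: less_induct)
  case less
  show ?case
  proof (cases "distinct p")
    case True thus ?thesis using less.prems by blast
  next
    case False
    then obtain xs ys zs y where p: "p = xs @ [y] @ ys @ [y] @ zs"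
      using not_distinct_decomp by blast
    let ?q = "xs @ [y] @ zs"
    have w: "walk V E ?q" using less.prems unfolding p walk_succ
      by (auto simp: successively_append_iff successively_Cons)
    have "length ?q < length p" using p by simp
    then obtain q where q: "walk V E q" "distinct q" "hd q = hd ?q" "last q = last ?q" "set q \<subseteq> set ?q"
      using less.hyps[OF _ w] by blast
    have "hd ?q = hd p" "last ?q = last p" "set ?q \<subseteq> set p" using p by (cases xs; cases zs; auto)+
    thus ?thesis using q by auto
  qed
qed

context tr begin

abbreviation "d r v \<equiv> dist V E r v"

lemma d_ex: assumes "r \<in> V" "v \<in> V"
  shows "\<exists>p. walk V E p \<and> hd p = r \<and> last p = v \<and> length p = Suc (d r v)"
proof -
  obtain p where p: "walk V E p" "hd p = r" "last p = v" using conn assms by blast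
  hence "length p = Suc (length p - 1)" unfolding walk_def by (cases p) auto
  hence "\<exists>k p. walk V E p \<and> hd p = r \<and> last p = v \<and> length p = Suc k" using p by blast
  thus ?thesis unfolding dist_def by (rule LeastI_ex)
qed

lemma d_le: assumes "walk V E p" "hd p = r" "last p = v" shows "Suc (d r v) \<le> length p"
proof -
  have "length p = Suc (length p - 1)" using assms unfolding walk_def by (cases p) auto
  hence "d r v \<le> length p - 1" unfolding dist_def
    by (intro Least_le) (use assms in metis)
  thus ?thesis using \<open>length p = _\<close> by linarith
qed

lemma walk_take: "walk V E p \<Longrightarrow> i < length p \<Longrightarrow> walk V E (take (Suc i) p)"
  unfolding walk_def by (auto dest: in_set_takeD)

lemma d_prefix: assumes "walk V E p" "hd p = r" "i < length p" shows "d r (p ! i) \<le> i"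
proof -
  have "walk V E (take (Suc i) p)" using walk_take assms by blast
  moreover have "hd (take (Suc i) p) = r" using assms by (cases p) auto
  moreover have "last (take (Suc i) p) = p ! i" using assms by (simp add: take_Suc_conv_app_nth)
  ultimately have "Suc (d r (p!i)) \<le> length (take (Suc i) p)" by (rule d_le)
  thus ?thesis using assms by simp
qed

lemma d_adj: assumes "r \<in> V" "adj E u v" shows "d r v \<le> Suc (d r u)"
proof -
  have uv: "u \<in> V" "v \<in> V" using adjV assms by auto
  obtain p where p: "walk V E p" "hd p = r" "last p = u" "length p = Suc (d r u)"
    using d_ex assms uv by blast
  have "walk V E (p @ [v])" using p assms uv unfolding walk_succ
    by (auto simp: successively_append_iff)
  moreover have "hd (p @ [v]) = r" using p unfolding walk_def by simp
  ultimately have "Suc (d r v) \<le> length (p @ [v])" using d_le by fastforce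
  thus ?thesis using p by simp
qed

lemma d_self: assumes "r \<in> V" shows "d r r = 0"
proof -
  have "walk V E [r]" using assms unfolding walk_def by auto
  thus ?thesis unfolding dist_def by (intro Least_equality) auto
qed

lemma d_zero: assumes "r \<in> V" "v \<in> V" "d r v = 0" shows "v = r"
proof -
  obtain p where p: "walk V E p" "hd p = r" "last p = v" "length p = Suc (d r v)"
    using d_ex assms by blast
  then obtain x where "p = [x]" using assms by (cases p) auto
  thus ?thesis using p by simp
qed

lemma d_parent: assumes "r \<in> V" "v \<in> V" "v \<noteq> r"
  shows "\<exists>u. adj E u v \<and> Suc (d r u) = d r v"
proof -
  obtain p where p: "walk V E p" "hd p = r" "last p = v" "length p = Suc (d r v)"
    using d_ex assms by blast
  have "d r v \<noteq> 0" using d_zero assms by blast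
  then obtain k where k: "d r v = Suc k" by (cases "d r v") auto
  let ?u = "p ! k"
  have a: "adj E ?u v" using p k unfolding walk_def by (auto simp: last_conv_nth)
  have "d r ?u \<le> k" using d_prefix p k by simp
  moreover have "d r v \<le> Suc (d r ?u)" using d_adj[OF assms(1) a] .
  ultimately show ?thesis using a k by auto
qed

end



context tr begin

lemma not_in_short:
  assumes "r \<in> V" "walk V E p" "hd p = r" "last p = a" "length p = Suc (d r a)"
    "d r a \<le> d r v" "v \<noteq> a" "v \<in> V"
  shows "v \<notin> set p"
proof
  assume "v \<in> set p"
  then obtain i where i: "i < length p" "p ! i = v" by (auto simp: in_set_conv_nth)
  have "d r v \<le> i" using d_prefix[OF assms(2,3) i(1)] i by simp
  hence "i = length p - 1" using i assms by linarith
  moreover have "p \<noteq> []" using i by auto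
  ultimately have "p ! i = a" using assms by (simp add: last_conv_nth)
  thus False using i assms by simp
qed

lemma lower_unique:
  assumes r: "r \<in> V" and va: "adj E v a" and vb: "adj E v b"
    and da: "d r a \<le> d r v" and db: "d r b \<le> d r v"
  shows "a = b"
proof (rule ccontr)
  assume ab: "a \<noteq> b"
  have V: "v \<in> V" "a \<in> V" "b \<in> V" "v \<noteq> a" "v \<noteq> b" using adjV va vb by auto
  obtain pa where pa: "walk V E pa" "hd pa = r" "last pa = a" "length pa = Suc (d r a)"
    using d_ex r V by blast
  obtain pb where pb: "walk V E pb" "hd pb = r" "last pb = b" "length pb = Suc (d r b)"
    using d_ex r V by blast
  have na: "v \<notin> set pa" using not_in_short[OF r pa da] V by blast
  have nb: "v \<notin> set pb" using not_in_short[OF r pb db] V by blast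
  let ?W = "rev pa @ tl pb"
  have pan: "pa \<noteq> []" "pb \<noteq> []" using pa pb unfolding walk_def by auto
  have wW: "walk V E ?W"
    by (rule walk_join) (use walk_rev pa pb pan in \<open>auto simp: last_rev\<close>)
  have nW: "v \<notin> set ?W" using na nb by (cases pb) auto
  have hW: "hd ?W = a" using pa pan by (simp add: hd_rev)
  have lW: "last ?W = b"
  proof (cases "tl pb = []")
    case True
    then have "pb = [r]" using pb pan by (cases pb) auto
    then show ?thesis using True pa pb pan by (simp add: last_rev)
  next
    case False
    then show ?thesis using pb pan by (simp add: last_tl)
  qed
  have "walk (V - {v}) E ?W" using wW nW unfolding walk_def by auto
  then obtain q where q: "walk (V - {v}) E q" "distinct q" "hd q = a" "last q = b"
    using walk_distinct[of "V - {v}" E ?W] hW lW by auto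
  have qn: "q \<noteq> []" using q unfolding walk_def by auto
  have "length q \<noteq> 1" using q ab qn by (cases q) auto
  hence lq: "length q \<ge> 2" using qn by (cases q) (auto simp: Suc_le_eq)
  have "walk V E (v # q)" using q V va unfolding walk_succ by (auto simp: successively_Cons)
  moreover have "distinct (v # q)" using q unfolding walk_def by auto
  moreover have "adj E (last (v # q)) (hd (v # q))" using q qn vb by (simp add: adj_comm)
  ultimately have "has_cycle V E" unfolding has_cycle_def using lq by (intro exI[of _ "v # q"]) auto
  thus False using tree unfolding tree_def by auto
qed

end



context tr begin

lemma has_nbr: assumes "card V \<ge> 2" "v \<in> V" shows "\<exists>u. adj E v u"
proof -
  obtain z where z: "z \<in> V" "z \<noteq> v"
  proof -
    have "\<not> V \<subseteq> {v}"
    proof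
      assume "V \<subseteq> {v}"
      hence "card V \<le> card {v}" by (rule card_mono[rotated]) simp
      thus False using assms by simp
    qed
    thus ?thesis using that by blast
  qed
  obtain p where p: "walk V E p" "hd p = v" "last p = z" using conn assms z by blast
  have "length p \<noteq> 1" using p z by (cases p) auto
  hence "Suc 0 < length p" using p unfolding walk_def by (cases p) auto
  hence "adj E (p!0) (p!1)" using p unfolding walk_def by auto
  moreover have "p ! 0 = v" using p unfolding walk_def by (cases p) auto
  ultimately show ?thesis by auto
qed

lemma nonleaf_two: assumes "card V \<ge> 2" "v \<in> V" "v \<notin> leaves V E"
  shows "\<exists>a b. a \<noteq> b \<and> adj E v a \<and> adj E v b"
proof -
  have "{u. adj E v u} \<noteq> {}" using has_nbr assms by auto
  hence "card {u. adj E v u} \<noteq> 0" using nbr_fin by simp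
  moreover have "degree E v \<noteq> 1" using assms unfolding leaves_def by blast
  hence "card {u. adj E v u} \<noteq> 1" unfolding degree_def .
  obtain a where a: "a \<in> {u. adj E v u}" using \<open>{u. adj E v u} \<noteq> {}\<close> by blast
  have "{u. adj E v u} \<noteq> {a}"
  proof
    assume "{u. adj E v u} = {a}"
    hence "card {u. adj E v u} = 1" by simp
    thus False using \<open>card {u. adj E v u} \<noteq> 1\<close> by simp
  qed
  then obtain b where "b \<in> {u. adj E v u}" "b \<noteq> a" using a by blast
  thus ?thesis using a by blast
qed

lemma child: assumes "r \<in> V" "card V \<ge> 2" "v \<in> V" "v \<notin> leaves V E"
  shows "\<exists>w. adj E v w \<and> d r w = Suc (d r v)"
proof -
  obtain a b where ab: "a \<noteq> b" "adj E v a" "adj E v b" using nonleaf_two assms by blast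
  have "\<not> (d r a \<le> d r v \<and> d r b \<le> d r v)" using lower_unique[OF assms(1) ab(2,3)] ab by auto
  moreover have "d r a \<le> Suc (d r v)" "d r b \<le> Suc (d r v)" using d_adj assms ab by auto
  ultimately have "d r a = Suc (d r v) \<or> d r b = Suc (d r v)" by linarith
  thus ?thesis using ab by blast
qed

lemma support_ex: assumes "card V \<ge> 2" shows "\<exists>r. r \<in> support_vertices V E"
proof -
  have Vne: "V \<noteq> {}" using assms by auto
  then obtain r0 where r0: "r0 \<in> V" by blast
  have "Max (d r0 ` V) \<in> d r0 ` V" using finV Vne by (intro Max_in) auto
  then obtain v where v1: "v \<in> V" "d r0 v = Max (d r0 ` V)" by force
  have v: "v \<in> V" "\<forall>y\<in>V. d r0 y \<le> d r0 v" using v1 finV by auto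
  have "v \<in> leaves V E"
  proof (rule ccontr)
    assume "v \<notin> leaves V E"
    then obtain w where w: "adj E v w" "d r0 w = Suc (d r0 v)" using child r0 assms v by blast
    have "w \<in> V" using adjV(2)[OF w(1)] .
    hence "d r0 w \<le> d r0 v" using v(2) by blast
    thus False using w by simp
  qed
  moreover obtain u where "adj E v u" using has_nbr assms v by blast
  ultimately have "u \<in> support_vertices V E" unfolding support_vertices_def
    using adjV(2)[OF \<open>adj E v u\<close>] adj_sym[OF \<open>adj E v u\<close>] by blast
  thus ?thesis by blast
qed

lemma dist2: assumes "adj E a b" "adj E b c" "a \<noteq> c" "\<not> adj E a c"
  shows "dist V E a c = 2"
proof -
  have w: "walk V E [a,b,c]" using assms adjV unfolding walk_def
    by (auto simp: less_Suc_eq nth_Cons split: nat.splits)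
  show ?thesis unfolding dist_def
  proof (rule Least_equality)
    show "\<exists>p. walk V E p \<and> hd p = a \<and> last p = c \<and> length p = Suc 2" using w by (intro exI[of _ "[a,b,c]"]) auto
  next
    fix k assume "\<exists>p. walk V E p \<and> hd p = a \<and> last p = c \<and> length p = Suc k"
    then obtain p where p: "walk V E p" "hd p = a" "last p = c" "length p = Suc k" by blast
    show "2 \<le> k"
    proof (rule ccontr)
      assume "\<not> 2 \<le> k"
      hence "k = 0 \<or> k = 1" by auto
      thus False
      proof
        assume "k = 0" then obtain x where "p = [x]" using p by (cases p) auto
        thus False using p assms by auto
      next
        assume "k = 1" then have "length p = 2" using p by simp
        then obtain x y where xy: "p = [x,y]" by (metis length_0_conv length_Suc_conv numeral_2_eq_2)
        hence "adj E x y" using p unfolding walk_def by auto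
        thus False using p xy assms by auto
      qed
    qed
  qed
qed

lemma dist2_d: assumes r: "r \<in> V" and "adj E a b" "adj E b c" "d r c = d r a + 2 \<or> d r a = d r c + 2"
  shows "dist V E a c = 2"
proof (rule dist2)
  show "a \<noteq> c" using assms by auto
  show "\<not> adj E a c"
  proof
    assume "adj E a c"
    hence "d r c \<le> Suc (d r a)" "d r a \<le> Suc (d r c)" using d_adj[OF r \<open>adj E a c\<close>] d_adj[OF r adj_sym[OF \<open>adj E a c\<close>]] by auto
    thus False using assms by auto
  qed
qed (use assms in auto)

end



context tr begin

lemma walk_stuck:
  assumes Nu: "{x. adj E u x} = {v}" and Nv: "{x. adj E v x} = {u}"
  shows "successively (adj E) p \<Longrightarrow> p \<noteq> [] \<Longrightarrow> hd p \<in> {u,v} \<Longrightarrow> set p \<subseteq> {u,v}"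
proof (induction p)
  case Nil then show ?case by simp
next
  case (Cons x xs)
  show ?case
  proof (cases xs)
    case Nil then show ?thesis using Cons by simp
  next
    case (Cons y ys)
    have "adj E x y" using Cons \<open>successively (adj E) (x # xs)\<close> by simp
    moreover have "x \<in> {u,v}" using Cons.prems by simp
    ultimately have "y \<in> {u,v}" using Nu Nv by blast
    moreover have "successively (adj E) xs" using Cons.prems Cons by simp
    ultimately have "set xs \<subseteq> {u,v}" using Cons.IH Cons by simp
    thus ?thesis using \<open>x \<in> {u,v}\<close> by simp
  qed
qed

lemma leaf_nbr: assumes "v \<in> leaves V E" "adj E v u" shows "{x. adj E v x} = {u}"
proof -
  have "card {x. adj E v x} = 1" using assms unfolding leaves_def degree_def by blast
  then obtain z where "{x. adj E v x} = {z}" using card_1_singletonE by blast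
  thus ?thesis using assms by auto
qed

lemma LS_disj: assumes "card V \<ge> 3" shows "leaves V E \<inter> support_vertices V E = {}"
proof (rule ccontr)
  assume "leaves V E \<inter> support_vertices V E \<noteq> {}"
  then obtain u v where u: "u \<in> leaves V E" and v: "v \<in> leaves V E" and uv: "adj E u v"
    unfolding support_vertices_def by blast
  have Nu: "{x. adj E u x} = {v}" using leaf_nbr u uv by blast
  have Nv: "{x. adj E v x} = {u}" using leaf_nbr v adj_sym[OF uv] by blast
  have "\<not> V \<subseteq> {u,v}"
  proof
    assume "V \<subseteq> {u,v}"
    hence "card V \<le> card {u,v}" by (rule card_mono[rotated]) simp
    also have "\<dots> \<le> 2" by (simp add: card_insert_if)
    finally show False using assms by simp
  qed
  then obtain z where z: "z \<in> V" "z \<notin> {u,v}" by blast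
  have "u \<in> V" using adjV uv by blast
  then obtain p where p: "walk V E p" "hd p = u" "last p = z" using conn z by blast
  have "set p \<subseteq> {u,v}" using walk_stuck[OF Nu Nv] p unfolding walk_succ by simp
  moreover have "z \<in> set p" using p unfolding walk_def by auto
  ultimately show False using z by blast
qed

end



lemma four: "(m::nat) < 4 \<Longrightarrow> m = 0 \<or> m = 1 \<or> m = 2 \<or> m = 3" by linarith
lemma four': "(m::nat) mod 4 = 0 \<or> m mod 4 = 1 \<or> m mod 4 = 2 \<or> m mod 4 = 3" by (rule four) simp
lemma sucmod: "Suc j mod 4 = (j mod 4 + 1) mod 4" by (simp add: mod_Suc_eq)
lemma m1: assumes "(k::nat) mod 4 = (c+1) mod 4" "Suc j = k" "c < 4" shows "j mod 4 = c"
  using four[OF assms(3)] four'[of j] assms(1) unfolding assms(2)[symmetric] sucmod[of j]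
  by (elim disjE) simp_all
lemma m0: assumes "(k::nat) mod 4 \<noteq> c" "c < 4" shows "k mod 4 = (c+1) mod 4 \<or> k mod 4 = (c+3) mod 4 \<or> k mod 4 = (c+2) mod 4"
  using four[OF assms(2)] four'[of k] assms(1) by (elim disjE) simp_all
lemma m3: assumes "(k::nat) mod 4 = (c+3) mod 4" "j = Suc k" "c < 4" shows "j mod 4 = c"
  using four[OF assms(3)] four'[of k] assms(1) unfolding assms(2) sucmod[of k]
  by (elim disjE) simp_all
lemma m2a: assumes "(k::nat) mod 4 = (c+2) mod 4" "j = Suc (Suc k)" "c < 4" shows "j mod 4 = c"
  using four[OF assms(3)] four'[of k] assms(1) unfolding assms(2) sucmod[of "Suc k"] sucmod[of k]
  by (elim disjE) simp_all
lemma m2b: assumes "(k::nat) mod 4 = (c+2) mod 4" "Suc (Suc j) = k" "c < 4" shows "j mod 4 = c"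
  using four[OF assms(3)] four'[of j] assms(1) unfolding assms(2)[symmetric] sucmod[of "Suc j"] sucmod[of j]
  by (elim disjE) simp_all


context tr begin

lemma main3:
  assumes n3: "card V \<ge> 3" and rS: "r \<in> support_vertices V E" and c4: "c < (4::nat)"
  defines "L \<equiv> leaves V E" and "S \<equiv> support_vertices V E"
  defines "Dc \<equiv> S \<union> {v\<in>V. v \<notin> L \<and> d r v mod 4 = c}"
  shows "disj_dom_set V E Dc"
proof -
  have n2: "card V \<ge> 2" using n3 by simp
  have r: "r \<in> V" using rS unfolding support_vertices_def by blast
  have SV: "S \<subseteq> V" unfolding S_def support_vertices_def by blast
  have DcV: "Dc \<subseteq> V" unfolding Dc_def using SV by blast
  have rD: "r \<in> Dc" using rS unfolding Dc_def S_def by blast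
  have inD: "x \<in> Dc" if h: "x \<in> V" "adj E x y" "d r y = Suc (d r x)" "d r x mod 4 = c" for x y
  proof (cases "x = r")
    case True then show ?thesis using rD by simp
  next
    case False
    obtain q where q: "adj E q x" "Suc (d r q) = d r x" using d_parent[OF r h(1) False] by blast
    have "q \<noteq> y" using q h by auto
    have "{q,y} \<subseteq> {u. adj E x u}" using adj_sym[OF q(1)] h(2) by blast
    hence "card {q,y} \<le> degree E x" unfolding degree_def using nbr_fin by (rule card_mono[rotated])
    hence "degree E x \<noteq> 1" using \<open>q \<noteq> y\<close> by simp
    hence "x \<notin> L" unfolding L_def leaves_def by simp
    thus ?thesis using h(1,4) unfolding Dc_def by simp
  qed
  have inD2: "x \<in> Dc" if "x \<in> V" "x \<notin> L" "d r x mod 4 = c" for x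
    using that unfolding Dc_def by simp
  have leafS: "v \<in> S" if "adj E v w" "w \<in> L" for v w
    using adjV(1)[OF that(1)] that unfolding S_def L_def support_vertices_def by blast
  show ?thesis unfolding disj_dom_set_def
  proof (intro conjI ballI)
    show "Dc \<subseteq> V" unfolding Dc_def using SV by blast
  next
    fix v assume vV: "v \<in> V - Dc"
    hence v: "v \<in> V" "v \<notin> Dc" by auto
    show "(\<exists>u\<in>Dc. adj E v u) \<or> 2 \<le> card {u \<in> Dc. dist V E v u = 2}"
    proof (cases "v \<in> L")
      case True
      obtain u where u: "adj E v u" using has_nbr[OF n2 v(1)] by blast
      have "u \<in> S" using leafS[OF adj_sym[OF u] True] .
      thus ?thesis using u unfolding Dc_def by blast
    next
      case vL: False
      have vS: "v \<notin> S" using v unfolding Dc_def by blast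
      have vr: "v \<noteq> r" using v rD by blast
      have vm: "d r v mod 4 \<noteq> c" using v vL unfolding Dc_def by blast
      obtain w where w: "adj E v w" "d r w = Suc (d r v)" using child[OF r n2 v(1)] vL unfolding L_def by blast
      have wV: "w \<in> V" using adjV w by blast
      have wL: "w \<notin> L" using leafS[OF w(1)] vS by blast
      obtain p where p: "adj E p v" "Suc (d r p) = d r v" using d_parent[OF r v(1) vr] by blast
      have pV: "p \<in> V" using adjV p by blast
      consider "d r v mod 4 = (c+1) mod 4" | "d r v mod 4 = (c+3) mod 4" | "d r v mod 4 = (c+2) mod 4"
        using m0[OF vm c4] by blast
      then show ?thesis
      proof cases
        case 1
        have "d r p mod 4 = c" using m1[OF 1 p(2) c4] .
        hence "p \<in> Dc" using inD[OF pV p(1)] p by simp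
        thus ?thesis using adj_sym[OF p(1)] by blast
      next
        case 2
        have "d r w mod 4 = c" using m3[OF 2 w(2) c4] .
        hence "w \<in> Dc" using inD2[OF wV wL] by simp
        thus ?thesis using w by blast
      next
        case 3
        show ?thesis
        proof (cases "w \<in> S")
          case True
          hence "w \<in> Dc" unfolding Dc_def by blast
          thus ?thesis using w by blast
        next
          case wS: False
          obtain x where x: "adj E w x" "d r x = Suc (d r w)"
            using child[OF r n2 wV] wL unfolding L_def by blast
          have xV: "x \<in> V" using adjV x by blast
          have xL: "x \<notin> L" using leafS[OF x(1)] wS by blast
          have "d r x mod 4 = c" using m2a[OF 3 _ c4] x w by simp
          hence xD: "x \<in> Dc" using inD2[OF xV xL] by simp
          show ?thesis
          proof (cases "d r p = 0")
            case True
            hence "p = r" using d_zero[OF r pV] by simp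
            thus ?thesis using rD adj_sym[OF p(1)] by blast
          next
            case False
            hence pr: "p \<noteq> r" using d_self[OF r] by auto
            obtain g where g: "adj E g p" "Suc (d r g) = d r p" using d_parent[OF r pV pr] by blast
            have gV: "g \<in> V" using adjV g by blast
            have "d r g mod 4 = c" using m2b[OF 3 _ c4] p g by simp
            hence gD: "g \<in> Dc" using inD[OF gV g(1)] g by simp
            have dx: "dist V E v x = 2" using dist2_d[OF r w(1) x(1)] x w by simp
            have dg: "dist V E v g = 2" using dist2_d[OF r adj_sym[OF p(1)] adj_sym[OF g(1)]] p g by simp
            have xg: "x \<noteq> g" using x w p g by auto
            have "{x,g} \<subseteq> {u \<in> Dc. dist V E v u = 2}" using xD gD dx dg by blast
            moreover have "finite {u \<in> Dc. dist V E v u = 2}"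
              by (rule finite_subset[OF _ finV]) (use DcV in blast)
            ultimately have "card {x,g} \<le> card {u \<in> Dc. dist V E v u = 2}" by (rule card_mono[rotated])
            thus ?thesis using xg by simp
          qed
        qed
      qed
    qed
  qed
qed

end



context tr begin

lemma dd_le: "disj_dom_set V E D \<Longrightarrow> disj_dom_number V E \<le> card D"
  unfolding disj_dom_number_def by (rule Least_le) blast

lemma bound3: assumes n3: "card V \<ge> 3"
  shows "4 * disj_dom_number V E + card (leaves V E) \<le> card V + 3 * card (support_vertices V E)"
proof -
  define L where "L = leaves V E"
  define S where "S = support_vertices V E"
  obtain r where rS: "r \<in> S" using support_ex n3 unfolding S_def by fastforce
  define Oc where "Oc c = {v \<in> V. v \<notin> L \<and> v \<notin> S \<and> d r v mod 4 = c}" for c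
  define Ot where "Ot = V - (L \<union> S)"
  have LV: "L \<subseteq> V" unfolding L_def leaves_def by blast
  have SV: "S \<subseteq> V" unfolding S_def support_vertices_def by blast
  have LS: "L \<inter> S = {}" using LS_disj n3 unfolding L_def S_def by blast
  have finO: "finite (Oc c)" for c unfolding Oc_def using finV by simp
  have finS: "finite S" using SV finV finite_subset by blast
  have finL: "finite L" using LV finV finite_subset by blast
  have Ot_U: "Ot = (\<Union>c\<in>{..<4}. Oc c)"
  proof
    show "Ot \<subseteq> (\<Union>c\<in>{..<4}. Oc c)"
    proof
      fix v assume "v \<in> Ot"
      hence "v \<in> Oc (d r v mod 4)" unfolding Ot_def Oc_def by blast
      moreover have "d r v mod 4 \<in> {..<4::nat}" by simp
      ultimately show "v \<in> (\<Union>c\<in>{..<4}. Oc c)" by blast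
    qed
  qed (auto simp: Ot_def Oc_def)
  have "card Ot = (\<Sum>c\<in>{..<4}. card (Oc c))" unfolding Ot_U
    by (rule card_UN_disjoint) (use finO in \<open>auto simp: Oc_def\<close>)
  also have "\<dots> = card (Oc 0) + card (Oc 1) + card (Oc 2) + card (Oc 3)"
    by (simp add: numeral_eq_Suc lessThan_Suc)
  finally have cO: "card Ot = card (Oc 0) + card (Oc 1) + card (Oc 2) + card (Oc 3)" .
  obtain c where c: "c < (4::nat)" "4 * card (Oc c) \<le> card Ot"
  proof -
    have "\<exists>c<(4::nat). 4 * card (Oc c) \<le> card Ot"
    proof (rule ccontr)
      assume "\<not> ?thesis"
      hence "4 * card (Oc 0) > card Ot" "4 * card (Oc 1) > card Ot"
            "4 * card (Oc 2) > card Ot" "4 * card (Oc 3) > card Ot"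
        by (auto simp del: One_nat_def dest: spec[of _ 0] spec[of _ 1] spec[of _ 2] spec[of _ 3])
      thus False using cO by linarith
    qed
    thus ?thesis using that by blast
  qed
  have rS': "r \<in> support_vertices V E" using rS unfolding S_def .
  have dset: "disj_dom_set V E (S \<union> {v\<in>V. v \<notin> L \<and> d r v mod 4 = c})"
    using main3[OF n3 rS' c(1)] unfolding S_def L_def .
  have eq: "S \<union> {v\<in>V. v \<notin> L \<and> d r v mod 4 = c} = S \<union> Oc c" unfolding Oc_def by blast
  have "card (S \<union> Oc c) = card S + card (Oc c)"
    by (rule card_Un_disjoint) (use finS finO in \<open>auto simp: Oc_def\<close>)
  hence g: "disj_dom_number V E \<le> card S + card (Oc c)" using dd_le[OF dset] eq by simp
  have "card Ot = card V - card (L \<union> S)" unfolding Ot_def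
    by (rule card_Diff_subset) (use finL finS LV SV in auto)
  moreover have "card (L \<union> S) = card L + card S" by (rule card_Un_disjoint) (use finL finS LS in auto)
  moreover have "card (L \<union> S) \<le> card V" by (rule card_mono) (use finV LV SV in auto)
  ultimately show ?thesis using g c unfolding L_def[symmetric] S_def[symmetric] by linarith
qed

lemma bound2: assumes n2: "card V = 2"
  shows "4 * disj_dom_number V E + card (leaves V E) \<le> card V + 3 * card (support_vertices V E)"
proof -
  obtain a b where V: "V = {a,b}" "a \<noteq> b" using card_2_iff[THEN iffD1, OF n2] by blast
  have n2': "card V \<ge> 2" using n2 by simp
  have aV: "a \<in> V" and bV: "b \<in> V" using V by auto
  obtain u where u: "adj E a u" using has_nbr[OF n2' aV] by blast
  have "u \<in> V" "u \<noteq> a" using adjV(2,3)[OF u] by auto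
  hence "u = b" using V by blast
  hence ab: "adj E a b" "adj E b a" using u adj_sym by auto
  have Na: "{x. adj E a x} = {b}"
  proof
    show "{x. adj E a x} \<subseteq> {b}"
    proof
      fix x assume "x \<in> {x. adj E a x}"
      hence "x \<in> V" "x \<noteq> a" using adjV(2,3) by auto
      thus "x \<in> {b}" using V by auto
    qed
  qed (use ab in simp)
  have Nb: "{x. adj E b x} = {a}"
  proof
    show "{x. adj E b x} \<subseteq> {a}"
    proof
      fix x assume "x \<in> {x. adj E b x}"
      hence "x \<in> V" "x \<noteq> b" using adjV(2,3) by auto
      thus "x \<in> {a}" using V by auto
    qed
  qed (use ab in simp)
  have "degree E a = 1" "degree E b = 1" unfolding degree_def using Na Nb by simp_all
  hence L: "leaves V E = V" unfolding leaves_def using V by auto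
  have "a \<in> support_vertices V E" "b \<in> support_vertices V E"
    unfolding support_vertices_def L using ab aV bV by blast+
  hence S: "support_vertices V E = V" using V unfolding support_vertices_def by blast
  have "disj_dom_set V E {a}" unfolding disj_dom_set_def
  proof (intro conjI ballI)
    show "{a} \<subseteq> V" using aV by simp
    fix v assume "v \<in> V - {a}"
    hence "v = b" using V by blast
    thus "(\<exists>u\<in>{a}. adj E v u) \<or> 2 \<le> card {u \<in> {a}. dist V E v u = 2}" using ab by blast
  qed
  hence "disj_dom_number V E \<le> 1" using dd_le by fastforce
  thus ?thesis using L S n2 by simp
qed

end

theorem corollary2p5:
  fixes V :: "'a set" and E :: "'a set set"
  assumes "tree V E" and "card V \<ge> 2"
  shows "real (disj_dom_number V E)
           \<le> (real (card V) + 3 * real (card (support_vertices V E)) - real (card (leaves V E))) / 4"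
proof -
  interpret tr V E using assms(1) by unfold_locales
  have "4 * disj_dom_number V E + card (leaves V E) \<le> card V + 3 * card (support_vertices V E)"
  proof (cases "card V = 2")
    case True then show ?thesis using bound2 by blast
  next
    case False then show ?thesis using bound3 assms(2) by simp
  qed
  hence "real (4 * disj_dom_number V E + card (leaves V E)) \<le> real (card V + 3 * card (support_vertices V E))"
    by (rule of_nat_mono)
  thus ?thesis by simp
qed



end
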